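(* Let $G=([N],E)$ be a graph with anti-ferromagnetic Ising potentials (parameters $\beta>0$, $B\in\mathbb{R}$), and let $e=(i,k)$ be an edge with $i,k\in[N]$, added with the Ising edge potential; $G+e$ denotes the resulting graph. Then $$H(G+e)=\begin{cases}H(G)+\beta,& \text{if } i\not\stackrel{0}{\sim}k;\\ H_{m+1}+\beta,&\text{if } i\stackrel{m}{\sim}k \text{ but } i\not\stackrel{m+1}{\sim}k \text{ for some } m\le M-1;\\ H(G)-\beta,&\text{if } i\stackrel{m}{\sim}k \text{ for all } m\le M.\end{cases}$$
   Context: Anti-ferromagnetic Ising model: $\chi=\{0,1\}$, node potentials $H_i(0)=-B$, $H_i(1)=B$, edge potentials $H_e(x,y)=-\beta$ if $x=y$ and $\beta$ if $x\ne y$; $H(x)=\sum_iH_i(x_i)+\sum_{e\in E}H_e(x_e)$ for $x\in\{0,1\}^N$, $H(G)=\max_xH(x)$. Let $H_0=H(G)$ and, recursively, $H_m=\max\{H(x):H(x)<H_{m-1}\}$, so $H_0>H_1>\cdots$ are the distinct values of $H(x)$ over $x\in\{0,1\}^N$ in decreasing order. Let $M$ be the largest index $m$ with $H_m\ge H(G)-2\beta$ (if all values satisfy this, $M$ is the index of the smallest value). Let $\mathcal{C}_m=\{x:H(x)=H_m\}$. For $m\le M$, write $i\stackrel{m}{\sim}k$ iff $x_i=x_k$ for all $x\in\mathcal{C}_0\cup\dots\cup\mathcal{C}_m$. *)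

theory Defs
  imports Complex_Main
begin

text \<open>Vertices are 0,...,N-1; a configuration assigns a spin in {0,1} to every vertex
  (and 0 outside the vertex set, so that the configuration set is finite).
  Edges are two-element sets {i,k}.\<close>

definition configs :: "nat \<Rightarrow> (nat \<Rightarrow> nat) set" where
  "configs N = {x. (\<forall>i<N. x i \<in> {0,1}) \<and> (\<forall>i\<ge>N. x i = 0)}"

definition wf_graph :: "nat \<Rightarrow> nat set set \<Rightarrow> bool" where
  "wf_graph N E \<longleftrightarrow> (\<forall>e\<in>E. \<exists>i k. e = {i,k} \<and> i \<noteq> k \<and> i < N \<and> k < N)"

definition Hnode :: "real \<Rightarrow> nat \<Rightarrow> real" where
  "Hnode B v = (if v = 0 then - B else B)"

definition Hedge :: "real \<Rightarrow> (nat \<Rightarrow> nat) \<Rightarrow> nat set \<Rightarrow> real" where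
  "Hedge \<beta> x e = (if (\<forall>a\<in>e. \<forall>b\<in>e. x a = x b) then - \<beta> else \<beta>)"

definition Ham :: "nat \<Rightarrow> nat set set \<Rightarrow> real \<Rightarrow> real \<Rightarrow> (nat \<Rightarrow> nat) \<Rightarrow> real" where
  "Ham N E B \<beta> x = (\<Sum>i<N. Hnode B (x i)) + (\<Sum>e\<in>E. Hedge \<beta> x e)"

definition HG :: "nat \<Rightarrow> nat set set \<Rightarrow> real \<Rightarrow> real \<Rightarrow> real" where
  "HG N E B \<beta> = Max (Ham N E B \<beta> ` configs N)"

primrec Hlev :: "nat \<Rightarrow> nat set set \<Rightarrow> real \<Rightarrow> real \<Rightarrow> nat \<Rightarrow> real" where
  "Hlev N E B \<beta> 0 = HG N E B \<beta>"
| "Hlev N E B \<beta> (Suc m) =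
     Max {v \<in> Ham N E B \<beta> ` configs N. v < Hlev N E B \<beta> m}"

definition Midx :: "nat \<Rightarrow> nat set set \<Rightarrow> real \<Rightarrow> real \<Rightarrow> nat" where
  "Midx N E B \<beta> = Max {m. m < card (Ham N E B \<beta> ` configs N) \<and>
                          Hlev N E B \<beta> m \<ge> HG N E B \<beta> - 2 * \<beta>}"

definition Cset :: "nat \<Rightarrow> nat set set \<Rightarrow> real \<Rightarrow> real \<Rightarrow> nat \<Rightarrow> (nat \<Rightarrow> nat) set" where
  "Cset N E B \<beta> m = {x \<in> configs N. Ham N E B \<beta> x = Hlev N E B \<beta> m}"

definition msim :: "nat \<Rightarrow> nat set set \<Rightarrow> real \<Rightarrow> real \<Rightarrow> nat \<Rightarrow> nat \<Rightarrow> nat \<Rightarrow> bool" where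
  "msim N E B \<beta> m i k \<longleftrightarrow> (\<forall>x \<in> (\<Union>j\<le>m. Cset N E B \<beta> j). x i = x k)"

end

theory Submission
  imports Defs
begin

lemma configs_finite: "finite (configs N)"
proof -
  have "configs N \<subseteq> (\<lambda>S j. if j \<in> S then 1 else 0) ` Pow {..<N}"
  proof
    fix x assume x: "x \<in> configs N"
    have "x = (\<lambda>j. if j \<in> {j. j < N \<and> x j = 1} then 1 else 0)"
    proof
      fix j show "x j = (if j \<in> {j. j < N \<and> x j = 1} then 1 else 0)"
        using x unfolding configs_def by (cases "j < N") auto
    qed
    then show "x \<in> (\<lambda>S j. if j \<in> S then 1 else 0) ` Pow {..<N}" by blast
  qed
  then show ?thesis by (rule finite_subset) auto
qed

lemma configs_ne: "(\<lambda>_. 0) \<in> configs N"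
  unfolding configs_def by auto

lemma V_finite: "finite (Ham N E B \<beta> ` configs N)"
  using configs_finite by auto

lemma V_card_pos: "0 < card (Ham N E B \<beta> ` configs N)"
proof -
  have "Ham N E B \<beta> (\<lambda>_. 0) \<in> Ham N E B \<beta> ` configs N" using configs_ne[of N] by blast
  then show ?thesis using V_finite[of N E B \<beta>] by (metis card_gt_0_iff empty_iff)
qed

lemma Ham_le_HG: "x \<in> configs N \<Longrightarrow> Ham N E B \<beta> x \<le> HG N E B \<beta>"
  unfolding HG_def using V_finite by auto

lemma HG_in: "HG N E B \<beta> \<in> Ham N E B \<beta> ` configs N"
  unfolding HG_def using V_finite configs_ne[of N] by (intro Max_in) auto

lemma Hlev_inv:
  "m < card (Ham N E B \<beta> ` configs N) \<Longrightarrow>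
     Hlev N E B \<beta> m \<in> Ham N E B \<beta> ` configs N
   \<and> {v \<in> Ham N E B \<beta> ` configs N. Hlev N E B \<beta> m \<le> v} = Hlev N E B \<beta> ` {..m}
   \<and> card (Hlev N E B \<beta> ` {..m}) = Suc m"
proof (induction m)
  case 0
  have "{v \<in> Ham N E B \<beta> ` configs N. HG N E B \<beta> \<le> v} = {HG N E B \<beta>}"
    using HG_in[of N E B \<beta>] Ham_le_HG[of _ N E B \<beta>] by force
  then show ?case using HG_in by simp
next
  case (Suc m)
  let ?V = "Ham N E B \<beta> ` configs N"
  let ?h = "Hlev N E B \<beta>"
  from Suc.prems Suc.IH have IH: "?h m \<in> ?V" "{v \<in> ?V. ?h m \<le> v} = ?h ` {..m}"
     "card (?h ` {..m}) = Suc m" by auto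
  define S where "S = {v \<in> ?V. v < ?h m}"
  have SV: "S = ?V - {v \<in> ?V. ?h m \<le> v}" unfolding S_def by auto
  have fS: "finite S" unfolding S_def using V_finite by auto
  have "card S = card ?V - Suc m"
    unfolding SV using IH V_finite by (subst card_Diff_subset) auto
  with Suc.prems have "S \<noteq> {}" by auto
  have hS: "?h (Suc m) = Max S" unfolding S_def by simp
  have inS: "?h (Suc m) \<in> S" using hS fS \<open>S \<noteq> {}\<close> by simp
  have geS: "\<And>v. v \<in> S \<Longrightarrow> v \<le> ?h (Suc m)" using hS fS by simp
  have eq: "{v \<in> ?V. ?h (Suc m) \<le> v} = {v \<in> ?V. ?h m \<le> v} \<union> {?h (Suc m)}"
  proof -
    have "v \<in> ?V \<Longrightarrow> ?h (Suc m) \<le> v \<Longrightarrow> ?h m \<le> v \<or> v = ?h (Suc m)" for v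
      using geS[of v] unfolding S_def by force
    moreover have "?h (Suc m) \<le> ?h m" using inS unfolding S_def by auto
    ultimately show ?thesis using inS unfolding S_def by auto
  qed
  have img: "?h ` {..Suc m} = ?h ` {..m} \<union> {?h (Suc m)}"
    by (auto simp: atMost_Suc)
  have notin: "?h (Suc m) \<notin> ?h ` {..m}"
  proof
    assume "?h (Suc m) \<in> ?h ` {..m}"
    then have "?h (Suc m) \<in> {v \<in> ?V. ?h m \<le> v}" using IH(2) by simp
    then show False using inS unfolding S_def by simp
  qed
  show ?case using inS eq img IH notin unfolding S_def by auto
qed

lemma Hlev_mono:
  assumes "j \<le> m" "m < card (Ham N E B \<beta> ` configs N)"
  shows "Hlev N E B \<beta> m \<le> Hlev N E B \<beta> j"
proof -
  have "Hlev N E B \<beta> j \<in> Hlev N E B \<beta> ` {..m}" using assms by auto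
  also have "\<dots> = {v \<in> Ham N E B \<beta> ` configs N. Hlev N E B \<beta> m \<le> v}"
    using Hlev_inv[OF assms(2)] by auto
  finally show ?thesis by auto
qed

lemma Hlev_next:
  assumes "Suc m < card (Ham N E B \<beta> ` configs N)" "x \<in> configs N"
    "Ham N E B \<beta> x < Hlev N E B \<beta> m"
  shows "Ham N E B \<beta> x \<le> Hlev N E B \<beta> (Suc m)"
proof -
  have "finite {v \<in> Ham N E B \<beta> ` configs N. v < Hlev N E B \<beta> m}" using V_finite by auto
  then show ?thesis using assms by (simp add: Max_ge)
qed

lemma union_C:
  assumes "m < card (Ham N E B \<beta> ` configs N)"
  shows "(\<Union>j\<le>m. Cset N E B \<beta> j) = {x \<in> configs N. Hlev N E B \<beta> m \<le> Ham N E B \<beta> x}"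
proof
  show "(\<Union>j\<le>m. Cset N E B \<beta> j) \<subseteq> {x \<in> configs N. Hlev N E B \<beta> m \<le> Ham N E B \<beta> x}"
    using Hlev_mono[OF _ assms] unfolding Cset_def by fastforce
next
  show "{x \<in> configs N. Hlev N E B \<beta> m \<le> Ham N E B \<beta> x} \<subseteq> (\<Union>j\<le>m. Cset N E B \<beta> j)"
  proof
    fix x assume x: "x \<in> {x \<in> configs N. Hlev N E B \<beta> m \<le> Ham N E B \<beta> x}"
    then have "Ham N E B \<beta> x \<in> {v \<in> Ham N E B \<beta> ` configs N. Hlev N E B \<beta> m \<le> v}" by auto
    then have "Ham N E B \<beta> x \<in> Hlev N E B \<beta> ` {..m}" using Hlev_inv[OF assms] by auto
    then show "x \<in> (\<Union>j\<le>m. Cset N E B \<beta> j)" using x unfolding Cset_def by auto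
  qed
qed

lemma msim_iff:
  assumes "m < card (Ham N E B \<beta> ` configs N)"
  shows "msim N E B \<beta> m i k \<longleftrightarrow>
     (\<forall>x \<in> configs N. Hlev N E B \<beta> m \<le> Ham N E B \<beta> x \<longrightarrow> x i = x k)"
  unfolding msim_def union_C[OF assms] by auto

lemma wf_finite: "wf_graph N E \<Longrightarrow> finite E"
  unfolding wf_graph_def
  by (rule finite_subset[of _ "Pow {..<N}"]) auto

lemma Ham_ins:
  assumes "wf_graph N E" "{i,k} \<notin> E"
  shows "Ham N (insert {i,k} E) B \<beta> x =
         Ham N E B \<beta> x + (if x i = x k then - \<beta> else \<beta>)"
proof -
  have "Hedge \<beta> x {i,k} = (if x i = x k then - \<beta> else \<beta>)"
    unfolding Hedge_def by auto
  then show ?thesis unfolding Ham_def using wf_finite[OF assms(1)] assms(2) by simp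
qed

lemma HG_eqI:
  assumes "x \<in> configs N" "Ham N E B \<beta> x = c" "\<And>y. y \<in> configs N \<Longrightarrow> Ham N E B \<beta> y \<le> c"
  shows "HG N E B \<beta> = c"
  unfolding HG_def using assms V_finite by (intro Max_eqI) auto

theorem lemma1:
  fixes N :: nat and E :: "nat set set" and B \<beta> :: real and i k :: nat
  assumes "\<beta> > 0"
    and "wf_graph N E"
    and "i < N" and "k < N" and "i \<noteq> k"
    and "{i, k} \<notin> E"
  shows "(\<not> msim N E B \<beta> 0 i k \<longrightarrow> HG N (insert {i,k} E) B \<beta> = HG N E B \<beta> + \<beta>)
       \<and> (\<forall>m. m + 1 \<le> Midx N E B \<beta> \<and> msim N E B \<beta> m i k \<and> \<not> msim N E B \<beta> (m + 1) i k
              \<longrightarrow> HG N (insert {i,k} E) B \<beta> = Hlev N E B \<beta> (m + 1) + \<beta>)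
       \<and> ((\<forall>m \<le> Midx N E B \<beta>. msim N E B \<beta> m i k)
              \<longrightarrow> HG N (insert {i,k} E) B \<beta> = HG N E B \<beta> - \<beta>)"
proof -
  let ?V = "Ham N E B \<beta> ` configs N"
  let ?n = "card ?V"
  let ?H = "Ham N E B \<beta>"
  let ?H' = "Ham N (insert {i,k} E) B \<beta>"
  let ?h = "Hlev N E B \<beta>"
  let ?G = "HG N E B \<beta>"
  let ?M = "Midx N E B \<beta>"
  have H': "\<And>x. ?H' x = ?H x + (if x i = x k then - \<beta> else \<beta>)"
    using Ham_ins[OF assms(2,6)] by blast
  define MS where "MS = {m. m < ?n \<and> ?G - 2 * \<beta> \<le> ?h m}"
  have fMS: "finite MS" unfolding MS_def by auto
  have "0 \<in> MS" unfolding MS_def using V_card_pos assms(1) by simp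
  have MMS: "?M \<in> MS" unfolding Midx_def MS_def[symmetric]
    using fMS \<open>0 \<in> MS\<close> by (intro Max_in) auto
  have Mmax: "\<And>m. m \<in> MS \<Longrightarrow> m \<le> ?M"
    using fMS unfolding Midx_def MS_def[symmetric] by auto
  from MMS have Mn: "?M < ?n" and hM: "?G - 2 * \<beta> \<le> ?h ?M" unfolding MS_def by auto
  have c1: "\<not> msim N E B \<beta> 0 i k \<longrightarrow> HG N (insert {i,k} E) B \<beta> = ?G + \<beta>"
  proof
    assume "\<not> msim N E B \<beta> 0 i k"
    then obtain x where x: "x \<in> configs N" "?G \<le> ?H x" "x i \<noteq> x k"
      using msim_iff[OF V_card_pos] by auto
    show "HG N (insert {i,k} E) B \<beta> = ?G + \<beta>"
    proof (rule HG_eqI[OF x(1)])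
      show "?H' x = ?G + \<beta>" using x Ham_le_HG[OF x(1), of E B \<beta>] H'[of x] by auto
      fix y assume "y \<in> configs N"
      then show "?H' y \<le> ?G + \<beta>" using Ham_le_HG[of y N E B \<beta>] H'[of y] assms(1) by auto
    qed
  qed
  have c2: "\<forall>m. m + 1 \<le> ?M \<and> msim N E B \<beta> m i k \<and> \<not> msim N E B \<beta> (m + 1) i k
              \<longrightarrow> HG N (insert {i,k} E) B \<beta> = ?h (m + 1) + \<beta>"
  proof (intro allI impI)
    fix m assume a: "m + 1 \<le> ?M \<and> msim N E B \<beta> m i k \<and> \<not> msim N E B \<beta> (m + 1) i k"
    have mn: "Suc m < ?n" using a Mn by auto
    have ms: "\<And>y. y \<in> configs N \<Longrightarrow> ?h m \<le> ?H y \<Longrightarrow> y i = y k"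
      using a msim_iff[of m] mn by auto
    obtain x where x: "x \<in> configs N" "?h (Suc m) \<le> ?H x" "x i \<noteq> x k"
      using a msim_iff[of "Suc m"] mn by auto
    have "?H x < ?h m" using ms[OF x(1)] x(3) by force
    then have "?H x \<le> ?h (Suc m)" using Hlev_next[OF mn x(1)] by simp
    then have hx: "?H x = ?h (Suc m)" using x(2) by simp
    have hlow: "?h ?M \<le> ?h (Suc m)" using Hlev_mono[OF _ Mn, of "Suc m"] a by (simp del: Hlev.simps)
    show "HG N (insert {i,k} E) B \<beta> = ?h (m + 1) + \<beta>"
    proof (rule HG_eqI[OF x(1)])
      show "?H' x = ?h (m + 1) + \<beta>" using hx x H'[of x] by simp
      fix y assume y: "y \<in> configs N"
      show "?H' y \<le> ?h (m + 1) + \<beta>"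
      proof (cases "y i = y k")
        case True
        then show ?thesis using H'[of y] Ham_le_HG[OF y, of E B \<beta>] hlow hM by simp
      next
        case False
        then have "?H y < ?h m" using ms[OF y] by force
        then have "?H y \<le> ?h (Suc m)" using Hlev_next[OF mn y] by simp
        then show ?thesis using H'[of y] False by simp
      qed
    qed
  qed
  have c3: "(\<forall>m \<le> ?M. msim N E B \<beta> m i k) \<longrightarrow> HG N (insert {i,k} E) B \<beta> = ?G - \<beta>"
  proof
    assume "\<forall>m \<le> ?M. msim N E B \<beta> m i k"
    then have ms: "\<And>y. y \<in> configs N \<Longrightarrow> ?h ?M \<le> ?H y \<Longrightarrow> y i = y k"
      using msim_iff[OF Mn] by auto
    obtain x where x: "x \<in> configs N" "?H x = ?G" using HG_in by (metis imageE)
    have "?h ?M \<le> ?G" using Hlev_mono[OF _ Mn, of 0] by simp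
    then have xe: "x i = x k" using ms[OF x(1)] x(2) by simp
    show "HG N (insert {i,k} E) B \<beta> = ?G - \<beta>"
    proof (rule HG_eqI[OF x(1)])
      show "?H' x = ?G - \<beta>" using x xe H'[of x] by simp
      fix y assume y: "y \<in> configs N"
      show "?H' y \<le> ?G - \<beta>"
      proof (cases "y i = y k")
        case True
        then show ?thesis using H'[of y] Ham_le_HG[OF y, of E B \<beta>] by simp
      next
        case False
        then have lt: "?H y < ?h ?M" using ms[OF y] by force
        show ?thesis
        proof (cases "Suc ?M < ?n")
          case True
          have "Suc ?M \<notin> MS" using Mmax by force
          then have "?h (Suc ?M) < ?G - 2 * \<beta>" using True unfolding MS_def by auto
          moreover have "?H y \<le> ?h (Suc ?M)" using Hlev_next[OF True y lt] .
          ultimately show ?thesis using H'[of y] False by simp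
        next
          case False
          then have nM: "?n = Suc ?M" using Mn by simp
          have inv: "{v \<in> ?V. ?h ?M \<le> v} = ?h ` {..?M}" "card (?h ` {..?M}) = Suc ?M"
            using Hlev_inv[OF Mn] by auto
          have "{v \<in> ?V. ?h ?M \<le> v} = ?V"
            using inv nM V_finite by (intro card_subset_eq) auto
          then have "?h ?M \<le> ?H y" using y by blast
          then show ?thesis using lt by simp
        qed
      qed
    qed
  qed
  show ?thesis using c1 c2 c3 by simp
qed

end
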